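(* Let $\mathcal T\in\Sigma^n$ be a text. The permutations $\pi,\bar\pi$ defined as $\pi(i)=\mathrm{IPA}[i]$ and $\bar\pi(i)=n-\mathrm{IPA}[i]+1$ for $i\in[n]$ are order-preserving for $\mathcal T$. Furthermore, $|\mathtt{st\text{-}colex}^-|\le\bar r$ and $|\mathtt{st\text{-}colex}^+|\le\bar r$.
   Context: A text is a string $\mathcal T\in\Sigma^n$ over an integer alphabet whose last symbol $\mathcal T[n]=\$$ occurs only there and is smallest. $\mathrm{IPA}[i]$ is the rank of the prefix $\mathcal T[1,i]$ among all prefixes of $\mathcal T$ in colexicographic order. A permutation $\pi:[n]\to[n]$ is order-preserving for $\mathcal T$ if for all $i,j\in[n-1]$, $\pi(i)<\pi(j)$ and $\mathcal T[i,i+1]=\mathcal T[j,j+1]$ imply $\pi(i+1)<\pi(j+1)$. For $i\ne j$, $\mathrm{rlce}(i,j)$ is the length of the longest common prefix of $\mathcal T[i,n]$ and $\mathcal T[j,n]$; $\mathrm{LPF}_\pi[i]=0$ if $\pi(i)=1$, else $\mathrm{LPF}_\pi[i]=\max_{\pi(j)<\pi(i)}\mathrm{rlce}(j,i)$; $\mathrm{PDA}_\pi$ is the set $\{i+\mathrm{LPF}_\pi[i]:i\in[n]\}$ sorted colexicographically by the prefixes $\mathcal T[1,j]$. $\mathtt{st\text{-}colex}^-=\mathrm{PDA}_\pi$ and $\mathtt{st\text{-}colex}^+=\mathrm{PDA}_{\bar\pi}$. $\bar r$ is the number of maximal equal-letter runs of $\mathrm{coBWT}(\mathcal T)$, obtained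 by sorting all rotations of $\mathcal T$ colexicographically and concatenating their first characters. *)

theory Defs
  imports Main
begin

(* Texts are lists over the integer alphabet nat; positions are 1-based:
   T[i] = T ! (i-1), n = length T. *)

definition is_text :: "nat list \<Rightarrow> bool" where
  "is_text T \<longleftrightarrow> T \<noteq> [] \<and> (\<forall>i < length T - 1. T ! i > last T)"

definition colex_less :: "nat list \<Rightarrow> nat list \<Rightarrow> bool" where
  "colex_less xs ys \<longleftrightarrow> (rev xs, rev ys) \<in> lexord {(a, b). a < b}"

definition IPA :: "nat list \<Rightarrow> nat \<Rightarrow> nat" where
  "IPA T i = card {j \<in> {1..length T}. colex_less (take j T) (take i T)} + 1"

definition order_preserving :: "nat list \<Rightarrow> (nat \<Rightarrow> nat) \<Rightarrow> bool" where
  "order_preserving T \<pi> \<longleftrightarrow> bij_betw \<pi> {1..length T} {1..length T} \<and>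
     (\<forall>i \<in> {1..length T - 1}. \<forall>j \<in> {1..length T - 1}.
        \<pi> i < \<pi> j \<and> T ! (i - 1) = T ! (j - 1) \<and> T ! i = T ! j \<longrightarrow> \<pi> (i + 1) < \<pi> (j + 1))"

fun lcp :: "nat list \<Rightarrow> nat list \<Rightarrow> nat" where
  "lcp (x # xs) (y # ys) = (if x = y then Suc (lcp xs ys) else 0)"
| "lcp _ _ = 0"

definition rlce :: "nat list \<Rightarrow> nat \<Rightarrow> nat \<Rightarrow> nat" where
  "rlce T i j = lcp (drop (i - 1) T) (drop (j - 1) T)"

definition LPF :: "nat list \<Rightarrow> (nat \<Rightarrow> nat) \<Rightarrow> nat \<Rightarrow> nat" where
  "LPF T \<pi> i = (if \<pi> i = 1 then 0
     else Max {rlce T j i | j. j \<in> {1..length T} \<and> \<pi> j < \<pi> i})"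

(* PDA_pi as a set; its size |PDA_pi| is the cardinality of this set *)
definition PDA :: "nat list \<Rightarrow> (nat \<Rightarrow> nat) \<Rightarrow> nat set" where
  "PDA T \<pi> = {i + LPF T \<pi> i | i. i \<in> {1..length T}}"

definition st_colex_minus :: "nat list \<Rightarrow> nat set" where
  "st_colex_minus T = PDA T (IPA T)"

definition st_colex_plus :: "nat list \<Rightarrow> nat set" where
  "st_colex_plus T = PDA T (\<lambda>i. length T - IPA T i + 1)"

(* rotations T[i..n] T[1..i-1] = rotate (i-1) T; sorted colexicographically
   (rotations are pairwise distinct for a text); insertion sort w.r.t. colex_less *)
fun colex_insert :: "nat list \<Rightarrow> nat list list \<Rightarrow> nat list list" where
  "colex_insert x [] = [x]"
| "colex_insert x (y # ys) = (if colex_less x y then x # y # ys else y # colex_insert x ys)"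

definition colex_sort :: "nat list list \<Rightarrow> nat list list" where
  "colex_sort xs = foldr colex_insert xs []"

definition coBWT :: "nat list \<Rightarrow> nat list" where
  "coBWT T = map hd (colex_sort (map (\<lambda>k. rotate k T) [0..<length T]))"

definition rbar :: "nat list \<Rightarrow> nat" where
  "rbar T = length (remdups_adj (coBWT T))"

end

theory Submission
  imports Defs
begin


lemma colex_conv: "colex_less xs ys \<longleftrightarrow> ord_class.lexordp (rev xs) (rev ys)"
  by (simp add: colex_less_def lexordp_conv_lexord)

lemma colex_irrefl: "\<not> colex_less xs xs"
  by (simp add: colex_conv lexordp_irreflexive')

lemma colex_trans: "colex_less xs ys \<Longrightarrow> colex_less ys zs \<Longrightarrow> colex_less xs zs"
  by (metis colex_conv lexordp_trans)

lemma colex_linear: "colex_less xs ys \<or> xs = ys \<or> colex_less ys xs"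
  by (metis colex_conv lexordp_linear rev_rev_ident)

lemma colex_snoc: "colex_less (xs @ [a]) (ys @ [b]) \<longleftrightarrow> a < b \<or> (a = b \<and> colex_less xs ys)"
  by (auto simp: colex_conv)

lemma colex_Nil: "colex_less [] ys \<longleftrightarrow> ys \<noteq> []"
  by (simp add: colex_conv)

lemma take_snoc_nth: "1 \<le> a \<Longrightarrow> a \<le> length T \<Longrightarrow> take a T = take (a - 1) T @ [T ! (a - 1)]"
  by (metis Suc_diff_1 Suc_le_lessD diff_less less_le_trans take_Suc_conv_app_nth zero_less_one)

lemma take_inj: "a \<le> length T \<Longrightarrow> b \<le> length T \<Longrightarrow> take a T = take b T \<Longrightarrow> a = b"
  by (metis length_take min.absorb2)

lemma IPA_mono:
  assumes a: "a \<in> {1..length T}" and b: "b \<in> {1..length T}"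
    and c: "colex_less (take a T) (take b T)"
  shows "IPA T a < IPA T b"
proof -
  let ?S = "\<lambda>x. {j \<in> {1..length T}. colex_less (take j T) (take x T)}"
  have "?S a \<subset> ?S b"
  proof
    show "?S a \<subseteq> ?S b" using c colex_trans by blast
    show "?S a \<noteq> ?S b" using a c colex_irrefl by blast
  qed
  then have "card (?S a) < card (?S b)" by (intro psubset_card_mono) auto
  then show ?thesis by (simp add: IPA_def)
qed

lemma IPA_less:
  assumes a: "a \<in> {1..length T}" and b: "b \<in> {1..length T}"
  shows "IPA T a < IPA T b \<longleftrightarrow> colex_less (take a T) (take b T)"
proof
  assume l: "IPA T a < IPA T b"
  show "colex_less (take a T) (take b T)"
  proof (rule ccontr)
    assume nc: "\<not> ?thesis"
    from colex_linear[of "take a T" "take b T"] nc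
    have "take a T = take b T \<or> colex_less (take b T) (take a T)" by auto
    then show False
    proof
      assume "take a T = take b T" then have "a = b" using a b take_inj by auto
      then show False using l by simp
    next
      assume "colex_less (take b T) (take a T)"
      then have "IPA T b < IPA T a" using IPA_mono a b by blast
      then show False using l by simp
    qed
  qed
qed (rule IPA_mono[OF a b])

lemma IPA_range:
  assumes a: "a \<in> {1..length T}"
  shows "IPA T a \<in> {1..length T}"
proof -
  let ?S = "{j \<in> {1..length T}. colex_less (take j T) (take a T)}"
  have "?S \<subseteq> {1..length T} - {a}" using colex_irrefl by auto
  then have "card ?S \<le> card ({1..length T} - {a})" by (intro card_mono) auto
  also have "\<dots> = length T - 1" using a by simp
  finally show ?thesis using a by (simp add: IPA_def; linarith)
qed

lemma IPA_inj:
  assumes a: "a \<in> {1..length T}" and b: "b \<in> {1..length T}" and e: "IPA T a = IPA T b"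
  shows "a = b"
proof (rule ccontr)
  assume "a \<noteq> b"
  then have "take a T \<noteq> take b T" using take_inj a b by auto
  then have "colex_less (take a T) (take b T) \<or> colex_less (take b T) (take a T)"
    using colex_linear by blast
  then show False using IPA_mono[OF a b] IPA_mono[OF b a] e by auto
qed

lemma IPA_bij: "bij_betw (IPA T) {1..length T} {1..length T}"
proof -
  have i: "inj_on (IPA T) {1..length T}" using IPA_inj by (meson inj_onI)
  have "IPA T ` {1..length T} \<subseteq> {1..length T}" using IPA_range by blast
  then show ?thesis unfolding bij_betw_def using i endo_inj_surj by blast
qed



lemma lcp_nth: "t < lcp xs ys \<Longrightarrow> xs ! t = ys ! t \<and> t < length xs \<and> t < length ys"
proof (induction xs ys arbitrary: t rule: lcp.induct)
  case (1 x xs y ys)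
  then show ?case by (cases t) (auto split: if_splits)
qed auto

lemma lcp_ge: "m \<le> length xs \<Longrightarrow> m \<le> length ys \<Longrightarrow> (\<forall>t<m. xs ! t = ys ! t) \<Longrightarrow> m \<le> lcp xs ys"
proof (induction xs ys arbitrary: m rule: lcp.induct)
  case (1 x xs y ys)
  show ?case
  proof (cases m)
    case (Suc m')
    have "x = y" using 1(4) Suc by (metis nth_Cons_0 zero_less_Suc)
    moreover have "m' \<le> lcp xs ys"
    proof (rule 1(1)[OF \<open>x = y\<close>])
      show "m' \<le> length xs" "m' \<le> length ys" using 1(2,3) Suc by auto
      show "\<forall>t<m'. xs ! t = ys ! t" using 1(4) Suc by (metis Suc_less_eq nth_Cons_Suc)
    qed
    ultimately show ?thesis using Suc by simp
  qed simp
qed auto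

lemma rlce_nth:
  assumes "j \<in> {1..length T}" "i \<in> {1..length T}" "t < rlce T j i"
  shows "T ! (j - 1 + t) = T ! (i - 1 + t) \<and> j + t \<le> length T \<and> i + t \<le> length T"
  using lcp_nth[of t "drop (j - 1) T" "drop (i - 1) T"] assms unfolding rlce_def by auto

lemma rlce_ge:
  assumes "j \<in> {1..length T}" "i \<in> {1..length T}" "j + m \<le> length T + 1" "i + m \<le> length T + 1"
    "\<forall>t<m. T ! (j - 1 + t) = T ! (i - 1 + t)"
  shows "m \<le> rlce T j i"
  unfolding rlce_def using assms by (intro lcp_ge) auto

lemma rlce_bound:
  assumes htxt: "is_text T" and j: "j \<in> {1..length T}" and i: "i \<in> {1..length T}" and ne: "j \<noteq> i"
  shows "i + rlce T j i \<le> length T"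
proof (rule ccontr)
  let ?m = "rlce T j i"
  assume "\<not> ?thesis"
  then have m: "?m \<ge> length T - i + 1" using i by auto
  have "?m \<le> length (drop (j - 1) T)" "?m \<le> length (drop (i - 1) T)"
    unfolding rlce_def using lcp_nth by (metis less_irrefl not_le_imp_less)+
  then have "?m = length T - i + 1" "j < i" using m i j ne by auto
  then have "length T - i < ?m" by simp
  from rlce_nth[OF j i this] have eq: "T ! (j - 1 + (length T - i)) = T ! (i - 1 + (length T - i))" by blast
  have "i - 1 + (length T - i) = length T - 1" using i by simp
  moreover have "j - 1 + (length T - i) < length T - 1" using \<open>j < i\<close> i j by simp
  ultimately show False using htxt eq unfolding is_text_def
    by (metis last_conv_nth less_irrefl list.size(3) not_one_le_zero atLeastAtMost_iff i)
qed



lemma core: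
  fixes T :: "nat list" and \<sigma> :: "nat \<Rightarrow> nat" and n :: nat
  assumes nT: "n = length T"
  and htxt: "is_text T"
  and bij: "bij_betw \<sigma> {1..n} {1..n}"
  and H1: "\<And>a b. a \<in> {2..n} \<Longrightarrow> b \<in> {2..n} \<Longrightarrow> T!(a-1) = T!(b-1) \<Longrightarrow> (\<sigma> a < \<sigma> b \<longleftrightarrow> \<sigma> (a-1) < \<sigma> (b-1))"
  and H3: "\<And>a b x. a \<in> {1..n} \<Longrightarrow> b \<in> {1..n} \<Longrightarrow> x \<in> {1..n} \<Longrightarrow> \<sigma> a \<le> \<sigma> x \<Longrightarrow> \<sigma> x \<le> \<sigma> b \<Longrightarrow> T!(a-1) = T!(b-1) \<Longrightarrow> T!(x-1) = T!(a-1)"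
  and H2: "((\<forall>b\<in>{2..n}. T!0 = T!(b-1) \<longrightarrow> \<sigma> 1 < \<sigma> b) \<and> \<sigma> n = 1) \<or> ((\<forall>b\<in>{2..n}. T!0 = T!(b-1) \<longrightarrow> \<sigma> b < \<sigma> 1) \<and> \<sigma> n = n)"
  shows "card (PDA T \<sigma>) \<le> card {r \<in> {1..n}. r = 1 \<or> (\<forall>k\<in>{1..n}. \<forall>q\<in>{1..n}. \<sigma> k = r - 1 \<longrightarrow> \<sigma> q = r \<longrightarrow> T!(k mod n) \<noteq> T!(q mod n))}"
    (is "_ \<le> card ?R")
proof -
  have n1: "n \<ge> 1" using htxt nT unfolding is_text_def by (simp add: Suc_leI)
  have srange: "\<sigma> x \<in> {1..n}" if "x \<in> {1..n}" for x using bij that bij_betwE by blast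
  have sinj: "x = y" if "x \<in> {1..n}" "y \<in> {1..n}" "\<sigma> x = \<sigma> y" for x y
    using bij that unfolding bij_betw_def inj_on_def by blast
  have ssurj: "\<exists>x\<in>{1..n}. \<sigma> x = r" if "r \<in> {1..n}" for r
    using bij that unfolding bij_betw_def by (metis imageE)
  have last_small: "T ! x \<noteq> T ! (n - 1)" if "x < n - 1" for x
    using htxt that nT unfolding is_text_def by (metis last_conv_nth less_irrefl list.size(3) n1 not_one_le_zero)
  have LPFub: "rlce T j i \<le> LPF T \<sigma> i" if "i \<in> {1..n}" "j \<in> {1..n}" "\<sigma> j < \<sigma> i" for i j
  proof -
    have ne: "\<sigma> i \<noteq> 1" using that srange[of j] by auto
    have fin: "finite {rlce T j i | j. j \<in> {1..length T} \<and> \<sigma> j < \<sigma> i}" by simp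
    have "rlce T j i \<in> {rlce T j i | j. j \<in> {1..length T} \<and> \<sigma> j < \<sigma> i}" using that nT by auto
    then show ?thesis unfolding LPF_def using ne Max_ge[OF fin] by simp
  qed
  have LPFmax: "\<exists>j\<in>{1..n}. \<sigma> j < \<sigma> i \<and> rlce T j i = LPF T \<sigma> i" if "i \<in> {1..n}" "\<sigma> i \<noteq> 1" for i
  proof -
    obtain j0 where j0: "j0 \<in> {1..n}" "\<sigma> j0 = 1" using ssurj[of 1] n1 by auto
    have "\<sigma> i \<ge> 1" using srange that by auto
    then have "\<sigma> j0 < \<sigma> i" using that j0 by auto
    then have ne: "{rlce T j i | j. j \<in> {1..length T} \<and> \<sigma> j < \<sigma> i} \<noteq> {}" using j0 nT by auto
    have fin: "finite {rlce T j i | j. j \<in> {1..length T} \<and> \<sigma> j < \<sigma> i}" by simp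
    have "LPF T \<sigma> i \<in> {rlce T j i | j. j \<in> {1..length T} \<and> \<sigma> j < \<sigma> i}"
      unfolding LPF_def using that Max_in[OF fin ne] by simp
    then show ?thesis using nT by auto
  qed
  have NE: False if "i \<in> {1..n}" "j \<in> {1..n}" "\<sigma> j < \<sigma> i" "LPF T \<sigma> i = l"
    "\<forall>t\<le>l. T!(j-1+t) = T!(i-1+t)" "j + l \<le> n" "i + l \<le> n" for i j l
  proof -
    have "Suc l \<le> rlce T j i" using that nT by (intro rlce_ge) auto
    then show False using LPFub[OF that(1-3)] that(4) by simp
  qed
  have propag: "\<sigma> (j + m) < \<sigma> (i + m)" if "\<sigma> j < \<sigma> i" "\<forall>t\<le>m. T!(j-1+t) = T!(i-1+t)"
    "j + m \<le> n" "i + m \<le> n" "j \<ge> 1" "i \<ge> 1" for i j m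
    using that
  proof (induction m)
    case (Suc m)
    have "\<sigma> (j + m) < \<sigma> (i + m)" using Suc by auto
    moreover have "T!(j + Suc m - 1) = T!(i + Suc m - 1)" using Suc(3)[rule_format, of "Suc m"] Suc(6,7) by simp
    ultimately show ?case using H1[of "j + Suc m" "i + Suc m"] Suc by auto
  qed simp
  have LB: "x > m \<and> (\<forall>t\<le>m. T!(x-1-t) = T!(a-1-t)) \<and> \<sigma>(a-m) \<le> \<sigma>(x-m) \<and> \<sigma>(x-m) \<le> \<sigma>(b-m)"
    if "a > m" "b > m" "a \<le> n" "b \<le> n" "x \<in> {1..n}" "\<forall>t\<le>m. T!(a-1-t) = T!(b-1-t)"
      "\<sigma> a \<le> \<sigma> x" "\<sigma> x \<le> \<sigma> b" for m a b x
    using that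
  proof (induction m)
    case 0
    have "T!(x-1) = T!(a-1)" using H3[of a b x] 0 by (metis atLeastAtMost_iff diff_zero le_zero_eq less_one linorder_not_less)
    then show ?case using 0 by simp
  next
    case (Suc m)
    have IH: "x > m \<and> (\<forall>t\<le>m. T!(x-1-t) = T!(a-1-t)) \<and> \<sigma>(a-m) \<le> \<sigma>(x-m) \<and> \<sigma>(x-m) \<le> \<sigma>(b-m)"
    proof (rule Suc.IH)
      show "m < a" "m < b" using Suc.prems(1,2) by linarith+
      show "\<forall>t\<le>m. T!(a-1-t) = T!(b-1-t)" using Suc.prems(6) by simp
    qed (use Suc.prems in auto)
    define a' where "a' = a - m"
    define b' where "b' = b - m"
    define x' where "x' = x - m"
    have a'2: "a' \<in> {2..n}" "b' \<in> {2..n}" using Suc.prems(1-4) unfolding a'_def b'_def by auto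
    have x'1: "x' \<in> {1..n}" using IH Suc.prems(5) unfolding x'_def by auto
    have cx: "T!(x'-1) = T!(a'-1)" using IH unfolding x'_def a'_def by (simp add: diff_diff_add add.commute)
    have cab: "T!(a'-1) = T!(b'-1)" using Suc(7)[rule_format, of m] unfolding a'_def b'_def
      by (simp add: diff_diff_add add.commute)
    have le1: "\<sigma> a' \<le> \<sigma> x'" "\<sigma> x' \<le> \<sigma> b'" using IH unfolding a'_def b'_def x'_def by auto
    have x'2: "x' \<noteq> 1"
    proof
      assume x1: "x' = 1"
      from H2 show False
      proof
        assume "(\<forall>b\<in>{2..n}. T!0 = T!(b-1) \<longrightarrow> \<sigma> 1 < \<sigma> b) \<and> \<sigma> n = 1"
        then have "\<sigma> 1 < \<sigma> a'" using a'2 cx x1 by auto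
        then show False using le1 x1 by auto
      next
        assume "(\<forall>b\<in>{2..n}. T!0 = T!(b-1) \<longrightarrow> \<sigma> b < \<sigma> 1) \<and> \<sigma> n = n"
        then have "\<sigma> b' < \<sigma> 1" using a'2 cx x1 cab by auto
        then show False using le1 x1 by auto
      qed
    qed
    then have x'2': "x' \<in> {2..n}" using x'1 by auto
    have le2: "\<sigma> (a'-1) \<le> \<sigma> (x'-1)"
      using H1[OF a'2(1) x'2' cx[symmetric]] le1 sinj[of a' x'] a'2 x'2' by (cases "a' = x'") auto
    have le3: "\<sigma> (x'-1) \<le> \<sigma> (b'-1)"
      using H1[OF x'2' a'2(2)] cx cab le1 sinj[of x' b'] a'2 x'2' by (cases "x' = b'") auto
    have c2: "T!(a'-1-1) = T!(b'-1-1)" using Suc(7)[rule_format, of "Suc m"] unfolding a'_def b'_def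
      by (simp add: diff_diff_add add.commute)
    have c3: "T!(x'-1-1) = T!(a'-1-1)"
    proof -
      have r: "a'-1 \<in> {1..n}" "b'-1 \<in> {1..n}" "x'-1 \<in> {1..n}" using a'2 x'2' by auto
      show ?thesis using H3[OF r le2 le3 c2] .
    qed
    have "x > Suc m" using x'2' unfolding x'_def by auto
    moreover have "\<forall>t\<le>Suc m. T!(x-1-t) = T!(a-1-t)"
    proof (intro allI impI)
      fix t assume "t \<le> Suc m"
      then consider "t \<le> m" | "t = Suc m" by linarith
      then show "T!(x-1-t) = T!(a-1-t)"
      proof cases
        case 1 then show ?thesis using IH by auto
      next
        case 2 then show ?thesis using c3 unfolding x'_def a'_def by (simp add: diff_diff_add add.commute)
      qed
    qed
    moreover have "\<sigma>(a - Suc m) \<le> \<sigma>(x - Suc m)" "\<sigma>(x - Suc m) \<le> \<sigma>(b - Suc m)"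
      using le2 le3 unfolding a'_def b'_def x'_def by (simp_all add: diff_diff_add add.commute)
    ultimately show ?case by blast
  qed

  have PDAe: "PDA T \<sigma> = (\<lambda>i. i + LPF T \<sigma> i) ` {1..n}" unfolding PDA_def nT by auto
  have pbound: "i + LPF T \<sigma> i \<le> n" if i: "i \<in> {1..n}" for i
  proof (cases "\<sigma> i = 1")
    case True then show ?thesis using i by (simp add: LPF_def)
  next
    case False
    then obtain j where j: "j \<in> {1..n}" "\<sigma> j < \<sigma> i" "rlce T j i = LPF T \<sigma> i" using LPFmax i by blast
    then have "j \<noteq> i" by auto
    then show ?thesis using rlce_bound[OF htxt, of j i] j i nT by auto
  qed
  define g where "g p = \<sigma> (if p = 1 then n else p - 1)" for p
  have ginj: "inj_on g (PDA T \<sigma>)"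
  proof (rule inj_onI)
    fix p p' assume p: "p \<in> PDA T \<sigma>" and p': "p' \<in> PDA T \<sigma>" and e: "g p = g p'"
    have pr: "p \<in> {1..n}" "p' \<in> {1..n}" using p p' pbound unfolding PDAe by auto
    have "(if p = 1 then n else p - 1) \<in> {1..n}" "(if p' = 1 then n else p' - 1) \<in> {1..n}"
      using pr n1 by auto
    then have "(if p = 1 then n else p - 1) = (if p' = 1 then n else p' - 1)"
      using sinj e unfolding g_def by blast
    then show "p = p'" using pr by (auto split: if_splits)
  qed
  have gmaps: "g p \<in> ?R" if p: "p \<in> PDA T \<sigma>" for p
  proof -
    obtain i where i: "i \<in> {1..n}" and pe: "p = i + LPF T \<sigma> i" using p unfolding PDAe by auto
    define l where "l = LPF T \<sigma> i"
    have pn: "p \<le> n" using pbound[OF i] pe by simp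
    show ?thesis
    proof (cases "p = 1")
      case True
      then have i1: "i = 1" and l0: "l = 0" using pe i l_def by auto
      have gp: "g p = \<sigma> n" using True g_def by simp
      have "\<sigma> n \<in> {1..n}" using srange n1 by auto
      moreover have "\<sigma> n = 1 \<or> (\<forall>k\<in>{1..n}. \<forall>q\<in>{1..n}. \<sigma> k = \<sigma> n - 1 \<longrightarrow> \<sigma> q = \<sigma> n \<longrightarrow> T!(k mod n) \<noteq> T!(q mod n))"
      proof (cases "\<sigma> n = 1")
        case False
        with H2 have B: "\<forall>b\<in>{2..n}. T!0 = T!(b-1) \<longrightarrow> \<sigma> b < \<sigma> 1" "\<sigma> n = n" by auto
        have "T!(k mod n) \<noteq> T!(q mod n)" if k: "k \<in> {1..n}" and q: "q \<in> {1..n}" and sk: "\<sigma> k = \<sigma> n - 1" and sq: "\<sigma> q = \<sigma> n" for k q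
        proof
          assume eq: "T!(k mod n) = T!(q mod n)"
          have qn: "q = n" using sinj[OF q _ sq] n1 by auto
          have kn: "k < n" using sk k B(2) False by (cases "k = n") auto
          have eq2: "T!0 = T!(k+1-1)" using eq qn kn by simp
          have "\<sigma> (k+1) < \<sigma> 1" using B(1) eq2 kn k by auto
          then show False using NE[of 1 "k+1" 0] n1 kn k l0 i1 l_def eq2 by auto
        qed
        then show ?thesis by blast
      qed simp
      ultimately show ?thesis using gp by simp
    next
      case False
      then have p2: "p \<ge> 2" using pe i by auto
      define q0 where "q0 = p - 1"
      have q0r: "q0 \<in> {1..n}" "q0 < n" using p2 pn q0_def by auto
      have gp: "g p = \<sigma> q0" using False g_def q0_def by simp
      have "\<sigma> q0 = 1 \<or> (\<forall>k\<in>{1..n}. \<forall>q\<in>{1..n}. \<sigma> k = \<sigma> q0 - 1 \<longrightarrow> \<sigma> q = \<sigma> q0 \<longrightarrow> T!(k mod n) \<noteq> T!(q mod n))"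
      proof (cases "\<sigma> q0 = 1")
        case False
        have sq2: "\<sigma> q0 \<ge> 2" using False srange[OF q0r(1)] by auto
        have "T!(k mod n) \<noteq> T!(q mod n)" if k: "k \<in> {1..n}" and q: "q \<in> {1..n}" and sk: "\<sigma> k = \<sigma> q0 - 1" and sq: "\<sigma> q = \<sigma> q0" for k q
        proof
          assume eq: "T!(k mod n) = T!(q mod n)"
          have qq: "q = q0" using sinj[OF q q0r(1) sq] .
          have eqq: "T!(k mod n) = T!q0" using eq qq q0r by simp
          have skq: "\<sigma> k < \<sigma> q0" using sk sq2 by simp
          show False
          proof (cases "l = 0")
            case True
            then have ip: "i = p" using pe l_def by simp
            show False
            proof (cases "k = n")
              case kn: True
              then have e0: "T!0 = T!(i-1)" using eqq ip q0_def by simp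
              from H2 show False
              proof
                assume A: "(\<forall>b\<in>{2..n}. T!0 = T!(b-1) \<longrightarrow> \<sigma> 1 < \<sigma> b) \<and> \<sigma> n = 1"
                then have "\<sigma> 1 < \<sigma> i" using e0 ip p2 pn by auto
                then show False using NE[of i 1 0] i n1 True l_def e0 by auto
              next
                assume "(\<forall>b\<in>{2..n}. T!0 = T!(b-1) \<longrightarrow> \<sigma> b < \<sigma> 1) \<and> \<sigma> n = n"
                then show False using skq kn srange[OF q0r(1)] by auto
              qed
            next
              case kn: False
              then have kn': "k < n" using k by auto
              have e1: "T!(k+1-1) = T!(i-1)" using eqq kn' ip q0_def by simp
              have "\<sigma> (k+1) < \<sigma> i \<longleftrightarrow> \<sigma> (k+1-1) < \<sigma> (i-1)"
              proof (rule H1)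
                show "k + 1 \<in> {2..n}" "i \<in> {2..n}" using kn' k ip p2 pn by auto
                show "T!(k+1-1) = T!(i-1)" using e1 .
              qed
              then have "\<sigma> (k+1) < \<sigma> i" using skq ip q0_def by simp
              then show False using NE[of i "k+1" 0] i kn' True l_def e1 ip pn by auto
            qed
          next
            case False
            then have l1: "l \<ge> 1" by simp
            have si1: "\<sigma> i \<noteq> 1" using False l_def by (auto simp: LPF_def)
            obtain j where j: "j \<in> {1..n}" "\<sigma> j < \<sigma> i" "rlce T j i = l"
              using LPFmax[OF i si1] l_def by blast
            have jt: "T!(j-1+t) = T!(i-1+t) \<and> j + t \<le> n \<and> i + t \<le> n" if "t < l" for t
              using rlce_nth[of j T i t] j i that nT by auto
            have a_le: "j + (l-1) \<le> n" using jt[of "l-1"] l1 by auto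
            have b_eq: "i + (l-1) = q0" using pe l_def q0_def l1 by simp
            have "\<sigma> (j + (l-1)) < \<sigma> (i + (l-1))"
              using propag[of j i "l-1"] j i jt l1 a_le b_eq q0r by auto
            then have sa: "\<sigma> (j + (l-1)) \<le> \<sigma> k" using b_eq sk by simp
            have chars: "\<forall>t\<le>l-1. T!(j + (l-1) - 1 - t) = T!(q0 - 1 - t)"
            proof (intro allI impI)
              fix t assume t: "t \<le> l - 1"
              have "T!(j-1+(l-1-t)) = T!(i-1+(l-1-t))" using jt[of "l-1-t"] l1 by auto
              moreover have "j + (l-1) - 1 - t = j-1+(l-1-t)" "q0 - 1 - t = i-1+(l-1-t)"
                using t j i b_eq by auto
              ultimately show "T!(j + (l-1) - 1 - t) = T!(q0 - 1 - t)" by simp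
            qed
            have LBr: "k > l-1 \<and> (\<forall>t\<le>l-1. T!(k-1-t) = T!(j + (l-1)-1-t)) \<and> \<sigma>(j + (l-1) - (l-1)) \<le> \<sigma>(k-(l-1)) \<and> \<sigma>(k-(l-1)) \<le> \<sigma>(q0-(l-1))"
              using LB[of "l-1" "j + (l-1)" q0 k] j a_le q0r b_eq k chars sa skq i by auto
            show False
            proof (cases "k = n")
              case True
              have "T!(n-1) = T!(j + (l-1) - 1)" using LBr True by (metis diff_zero le0)
              also have "\<dots> = T!(q0-1)" using chars by (metis diff_zero le0)
              finally have e: "T!(n-1) = T!(q0-1)" .
              have "q0 - 1 < n - 1" using q0r by auto
              from last_small[OF this] e show False by simp
            next
              case kn: False
              then have kn': "k < n" using k by auto
              define j' where "j' = k - (l-1)"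
              have kl: "k > l - 1" using LBr by blast
              have j'r: "j' \<in> {1..n}" using kl j'_def k by auto
              have sj': "\<sigma> j \<le> \<sigma> j'" "\<sigma> j' \<le> \<sigma> i" using LBr j'_def b_eq j by auto
              have "j' \<noteq> i" using j'_def b_eq skq LBr by auto
              then have sj'i: "\<sigma> j' < \<sigma> i" using sj' sinj[OF j'r i] by force
              have cc: "\<forall>t\<le>l. T!(j'-1+t) = T!(i-1+t)"
              proof (intro allI impI)
                fix t assume t: "t \<le> l"
                show "T!(j'-1+t) = T!(i-1+t)"
                proof (cases "t = l")
                  case True
                  have "j'-1+t = k" using True j'_def kl l1 by auto
                  moreover have "i-1+t = q0" using True b_eq l1 i by auto
                  ultimately show ?thesis using eqq kn' by simp
                next
                  case False
                  then have tl: "t < l" using t by simp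
                  have "l-1-t \<le> l-1" by simp
                  then have "T!(k-1-(l-1-t)) = T!(j + (l-1)-1-(l-1-t))" using LBr by blast
                  moreover have "k-1-(l-1-t) = j'-1+t" using j'_def kl tl by auto
                  moreover have "j + (l-1)-1-(l-1-t) = j-1+t" using tl j by auto
                  ultimately show ?thesis using jt[OF tl] by simp
                qed
              qed
              have "j' + l \<le> n" using j'_def kl kn' l1 by auto
              then show False using NE[OF i j'r sj'i l_def[symmetric] cc] pe l_def pn by auto
            qed
          qed
        qed
        then show ?thesis by blast
      qed simp
      then show ?thesis using gp srange[OF q0r(1)] by simp
    qed
  qed
  have "card (PDA T \<sigma>) \<le> card ?R"
    by (rule card_inj_on_le[OF ginj]) (use gmaps in auto)
  then show ?thesis .
qed



lemma IPA_step:
  assumes a: "a \<in> {2..length T}" and b: "b \<in> {2..length T}" and e: "T!(a-1) = T!(b-1)"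
  shows "IPA T a < IPA T b \<longleftrightarrow> IPA T (a-1) < IPA T (b-1)"
proof -
  have "IPA T a < IPA T b \<longleftrightarrow> colex_less (take a T) (take b T)" using a b by (intro IPA_less) auto
  also have "\<dots> \<longleftrightarrow> colex_less (take (a-1) T @ [T!(a-1)]) (take (b-1) T @ [T!(b-1)])"
    using take_snoc_nth[of a T] take_snoc_nth[of b T] a b by auto
  also have "\<dots> \<longleftrightarrow> colex_less (take (a-1) T) (take (b-1) T)" using e colex_snoc by simp
  also have "\<dots> \<longleftrightarrow> IPA T (a-1) < IPA T (b-1)" using a b by (intro IPA_less[symmetric]) auto
  finally show ?thesis .
qed

lemma IPA_first:
  assumes b: "b \<in> {2..length T}" and e: "T!0 = T!(b-1)"
  shows "IPA T 1 < IPA T b"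
proof -
  have "take 1 T = take 0 T @ [T!0]" using take_snoc_nth[of 1 T] b by auto
  moreover have "take b T = take (b-1) T @ [T!(b-1)]" using take_snoc_nth[of b T] b by auto
  moreover have "take (b-1) T \<noteq> []" using b by auto
  ultimately have "colex_less (take 1 T) (take b T)" using e colex_snoc[of "[]" "T!0" "take (b-1) T" "T!(b-1)"] colex_Nil by simp
  then show ?thesis using b by (subst IPA_less) auto
qed

lemma IPA_char:
  assumes a: "a \<in> {1..length T}" and b: "b \<in> {1..length T}" and e: "T!(a-1) \<noteq> T!(b-1)"
  shows "IPA T a < IPA T b \<longleftrightarrow> T!(a-1) < T!(b-1)"
proof -
  have "IPA T a < IPA T b \<longleftrightarrow> colex_less (take a T) (take b T)" using a b by (intro IPA_less) auto
  also have "\<dots> \<longleftrightarrow> colex_less (take (a-1) T @ [T!(a-1)]) (take (b-1) T @ [T!(b-1)])"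
    using take_snoc_nth[of a T] take_snoc_nth[of b T] a b by auto
  also have "\<dots> \<longleftrightarrow> T!(a-1) < T!(b-1)" using e colex_snoc by simp
  finally show ?thesis .
qed

lemma IPA_last:
  assumes t: "is_text T"
  shows "IPA T (length T) = 1"
proof -
  have ne: "T \<noteq> []" using t by (simp add: is_text_def)
  have "\<not> colex_less (take j T) (take (length T) T)" if j: "j \<in> {1..length T}" for j
  proof (cases "j = length T")
    case True then show ?thesis using colex_irrefl by simp
  next
    case False
    then have "j - 1 < length T - 1" using j by auto
    then have gt: "T!(j-1) > T!(length T - 1)" using t ne unfolding is_text_def by (simp add: last_conv_nth)
    have "take j T = take (j-1) T @ [T!(j-1)]" using take_snoc_nth[of j T] j by auto
    moreover have "take (length T) T = take (length T - 1) T @ [T!(length T - 1)]"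
      using take_snoc_nth[of "length T" T] ne by (simp add: Suc_leI)
    ultimately show ?thesis using gt colex_snoc by (metis less_asym less_irrefl)
  qed
  then show ?thesis unfolding IPA_def by auto
qed

lemma IPA_H3:
  assumes a: "a \<in> {1..length T}" and b: "b \<in> {1..length T}" and x: "x \<in> {1..length T}"
    and l1: "IPA T a \<le> IPA T x" and l2: "IPA T x \<le> IPA T b" and e: "T!(a-1) = T!(b-1)"
  shows "T!(x-1) = T!(a-1)"
proof (rule ccontr)
  assume ne: "T!(x-1) \<noteq> T!(a-1)"
  then have "a \<noteq> x" "x \<noteq> b" using e by auto
  then have "IPA T a < IPA T x" "IPA T x < IPA T b" using l1 l2 IPA_inj a b x
    by (metis le_neq_implies_less)+
  then have "T!(a-1) < T!(x-1)" "T!(x-1) < T!(b-1)" using IPA_char a b x ne e by (metis)+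
  then show False using e by simp
qed

definition pb :: "nat list \<Rightarrow> nat \<Rightarrow> nat" where
  "pb T i = length T - IPA T i + 1"

lemma pb_less:
  assumes a: "a \<in> {1..length T}" and b: "b \<in> {1..length T}"
  shows "pb T a < pb T b \<longleftrightarrow> IPA T b < IPA T a"
  using IPA_range[OF a] IPA_range[OF b] unfolding pb_def by auto

lemma pb_bij: "bij_betw (pb T) {1..length T} {1..length T}"
proof -
  have i: "inj_on (pb T) {1..length T}"
  proof (rule inj_onI)
    fix a b assume a: "a \<in> {1..length T}" and b: "b \<in> {1..length T}" and "pb T a = pb T b"
    then have "IPA T a = IPA T b" using IPA_range[OF a] IPA_range[OF b] unfolding pb_def by auto
    then show "a = b" using IPA_inj a b by blast
  qed
  have "pb T ` {1..length T} \<subseteq> {1..length T}" using IPA_range unfolding pb_def by fastforce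
  then show ?thesis unfolding bij_betw_def using i endo_inj_surj by blast
qed

lemma op_IPA: "order_preserving T (IPA T)"
  unfolding order_preserving_def
proof (intro conjI ballI impI)
  show "bij_betw (IPA T) {1..length T} {1..length T}" by (rule IPA_bij)
  fix i j assume i: "i \<in> {1..length T - 1}" and j: "j \<in> {1..length T - 1}"
    and h: "IPA T i < IPA T j \<and> T ! (i - 1) = T ! (j - 1) \<and> T ! i = T ! j"
  have "IPA T (i+1) < IPA T (j+1) \<longleftrightarrow> IPA T (i+1-1) < IPA T (j+1-1)"
    using i j h by (intro IPA_step) auto
  then show "IPA T (i + 1) < IPA T (j + 1)" using h by simp
qed

lemma op_pb: "order_preserving T (\<lambda>i. length T - IPA T i + 1)"
proof -
  have eq: "(\<lambda>i. length T - IPA T i + 1) = pb T" unfolding pb_def by auto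
  show ?thesis unfolding eq order_preserving_def
  proof (intro conjI ballI impI)
    show "bij_betw (pb T) {1..length T} {1..length T}" by (rule pb_bij)
    fix i j assume i: "i \<in> {1..length T - 1}" and j: "j \<in> {1..length T - 1}"
      and h: "pb T i < pb T j \<and> T ! (i - 1) = T ! (j - 1) \<and> T ! i = T ! j"
    have "IPA T j < IPA T i" using h pb_less i j by auto
    moreover have "IPA T (j+1) < IPA T (i+1) \<longleftrightarrow> IPA T (j+1-1) < IPA T (i+1-1)"
      using i j h by (intro IPA_step) auto
    ultimately have "IPA T (j+1) < IPA T (i+1)" by simp
    then show "pb T (i + 1) < pb T (j + 1)" using pb_less i j by auto
  qed
qed



lemma lexordp_sep:
  fixes d :: nat
  assumes "\<forall>z\<in>set u. d < z" "\<forall>z\<in>set v. d < z" "u \<noteq> v"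
  shows "ord_class.lexordp (u @ d # w) (v @ d # w') \<longleftrightarrow> ord_class.lexordp u v"
  using assms
proof (induction u arbitrary: v)
  case Nil
  then obtain y v' where "v = y # v'" by (cases v) auto
  then show ?case using Nil by auto
next
  case (Cons x u)
  show ?case
  proof (cases v)
    case Nil
    then show ?thesis using Cons by auto
  next
    case Cons2: (Cons y v')
    show ?thesis
    proof (cases "x = y")
      case True
      then have "u \<noteq> v'" using Cons Cons2 by auto
      then show ?thesis using Cons Cons2 True by auto
    next
      case False
      then show ?thesis using Cons2 by auto
    qed
  qed
qed

definition pre :: "nat list \<Rightarrow> nat \<Rightarrow> nat" where
  "pre T k = (if k = 0 then length T else k)"

lemma rev_rot:
  assumes t: "is_text T" and k: "0 < k" "k < length T"
  shows "rev (rotate k T) = rev (take k T) @ last T # rev (butlast (drop k T))"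
proof -
  have "rotate k T = drop k T @ take k T" using k by (simp add: rotate_drop_take)
  moreover have "drop k T \<noteq> []" using k by simp
  moreover have "last (drop k T) = last T" using k by simp
  ultimately show ?thesis by (metis append_butlast_last_id rev.simps(2) rev_append rev_rev_ident append_Cons append_Nil)
qed

lemma take_big:
  assumes t: "is_text T" and k: "k < length T"
  shows "\<forall>z\<in>set (rev (take k T)). last T < z"
proof
  fix z assume "z \<in> set (rev (take k T))"
  then obtain i where "i < k" "z = T ! i" by (auto simp: in_set_conv_nth)
  then show "last T < z" using t k unfolding is_text_def by auto
qed

lemma rot_colex:
  assumes t: "is_text T" and k: "k < length T" and k': "k' < length T"
  shows "colex_less (rotate k T) (rotate k' T) \<longleftrightarrow> colex_less (take (pre T k) T) (take (pre T k') T)"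
proof -
  have ne: "T \<noteq> []" using t by (simp add: is_text_def)
  have revT: "rev T = last T # rev (butlast T)" using ne by (cases T rule: rev_cases) auto
  have hd_take: "\<exists>w. rev (take j T) = T!(j-1) # w" if "0 < j" "j \<le> length T" for j
    using take_snoc_nth[of j T] that by simp
  have big: "last T < T!(j-1)" if "0 < j" "j < length T" for j
    using t that unfolding is_text_def by auto
  have small: "ord_class.lexordp (rev T) (rev (take j T))" "\<not> ord_class.lexordp (rev (take j T)) (rev T)"
    if jj: "0 < j" "j < length T" for j
  proof -
    obtain w where w: "rev (take j T) = T!(j-1) # w" using hd_take[OF jj(1) less_imp_le[OF jj(2)]] by blast
    show "ord_class.lexordp (rev T) (rev (take j T))" "\<not> ord_class.lexordp (rev (take j T)) (rev T)"
      unfolding w revT using big[OF jj] by simp_all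
  qed
  have small2: "ord_class.lexordp (rev T) (rev (rotate j T))" "\<not> ord_class.lexordp (rev (rotate j T)) (rev T)"
    if jj: "0 < j" "j < length T" for j
  proof -
    obtain w where w: "rev (take j T) = T!(j-1) # w" using hd_take[OF jj(1) less_imp_le[OF jj(2)]] by blast
    have "rev (rotate j T) = T!(j-1) # (w @ last T # rev (butlast (drop j T)))"
      using rev_rot[OF t jj] w by simp
    then show "ord_class.lexordp (rev T) (rev (rotate j T))" "\<not> ord_class.lexordp (rev (rotate j T)) (rev T)"
      unfolding revT using big[OF jj] by simp_all
  qed
  show ?thesis
  proof (cases "k = 0")
    case k0: True
    show ?thesis
    proof (cases "k' = 0")
      case True then show ?thesis using k0 by (simp add: pre_def)
    next
      case False
      have "pre T k = length T" "pre T k' = k'" using k0 False by (auto simp: pre_def)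
      then show ?thesis unfolding colex_conv using k0 small[of k'] small2[of k'] False k' by simp
    qed
  next
    case k0: False
    show ?thesis
    proof (cases "k' = 0")
      case True
      have "pre T k' = length T" "pre T k = k" using k0 True by (auto simp: pre_def)
      then show ?thesis unfolding colex_conv using True small[of k] small2[of k] k0 k by simp
    next
      case False
      show ?thesis
      proof (cases "k = k'")
        case True then show ?thesis using colex_irrefl by simp
      next
        case kk: False
        have pk: "pre T k = k" "pre T k' = k'" using k0 False by (auto simp: pre_def)
        have "rev (take k T) \<noteq> rev (take k' T)" using kk k k' take_inj by (metis less_imp_le rev_rev_ident)
        then have "ord_class.lexordp (rev (take k T) @ last T # rev (butlast (drop k T))) (rev (take k' T) @ last T # rev (butlast (drop k' T)))
             \<longleftrightarrow> ord_class.lexordp (rev (take k T)) (rev (take k' T))"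
          using take_big[OF t k] take_big[OF t k'] by (intro lexordp_sep)
        then show ?thesis unfolding colex_conv pk
          using rev_rot[OF t _ k] rev_rot[OF t _ k'] k0 False by simp
      qed
    qed
  qed
qed

lemma colex_insert_eq:
  assumes "x \<in> S" "set ys \<subseteq> S" "x \<notin> set ys"
    and ord: "\<forall>y\<in>S. \<forall>z\<in>S. colex_less y z \<longleftrightarrow> f y < f z" and inj: "inj_on f S"
  shows "colex_insert x ys = insort_key f x ys"
  using assms(1-3)
proof (induction ys)
  case (Cons y ys)
  have "f x \<noteq> f y" using inj Cons.prems unfolding inj_on_def by auto
  then have "colex_less x y \<longleftrightarrow> f x \<le> f y" using ord Cons.prems by auto
  then show ?case using Cons by auto
qed simp

lemma colex_sort_eq:
  assumes "distinct xs" "set xs \<subseteq> S"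
    and ord: "\<forall>y\<in>S. \<forall>z\<in>S. colex_less y z \<longleftrightarrow> f y < f z" and inj: "inj_on f S"
  shows "colex_sort xs = sort_key f xs"
  using assms(1,2)
proof (induction xs)
  case Nil then show ?case by (simp add: colex_sort_def)
next
  case (Cons x xs)
  have "colex_sort (x # xs) = colex_insert x (colex_sort xs)" by (simp add: colex_sort_def)
  also have "\<dots> = colex_insert x (sort_key f xs)" using Cons by simp
  also have "\<dots> = insort_key f x (sort_key f xs)"
    using Cons.prems by (intro colex_insert_eq[OF _ _ _ ord inj]) auto
  finally show ?case by simp
qed

lemma coBWT_prop:
  assumes t: "is_text T"
  shows "length (coBWT T) = length T \<and> (\<forall>j\<in>{1..length T}. coBWT T ! (IPA T j - 1) = T ! (j mod length T))"
proof -
  let ?n = "length T"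
  have ne: "T \<noteq> []" using t by (simp add: is_text_def)
  let ?rots = "map (\<lambda>k. rotate k T) [0..<?n]"
  let ?S = "set ?rots"
  define f where "f x = card {j \<in> {1..?n}. colex_less (rotate (j mod ?n) T) x}" for x
  have pre_r: "pre T k \<in> {1..?n}" if "k < ?n" for k using that by (auto simp: pre_def)
  have pre_mod: "pre T (j mod ?n) = j" if "j \<in> {1..?n}" for j
    using that by (cases "j = ?n") (auto simp: pre_def)
  have fr: "f (rotate k T) = IPA T (pre T k) - 1" if k: "k < ?n" for k
  proof -
    have "{j \<in> {1..?n}. colex_less (rotate (j mod ?n) T) (rotate k T)} = {j \<in> {1..?n}. colex_less (take j T) (take (pre T k) T)}"
    proof (intro Collect_cong conj_cong refl)
      fix j assume "j \<in> {1..?n}"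
      then show "colex_less (rotate (j mod ?n) T) (rotate k T) = colex_less (take j T) (take (pre T k) T)"
        using rot_colex[OF t _ k, of "j mod ?n"] pre_mod ne by simp
    qed
    then show ?thesis unfolding f_def IPA_def by simp
  qed
  have fpos: "IPA T (pre T k) \<ge> 1" if "k < ?n" for k using IPA_range[OF pre_r[OF that]] by simp
  have ord: "\<forall>y\<in>?S. \<forall>z\<in>?S. colex_less y z \<longleftrightarrow> f y < f z"
  proof (intro ballI)
    fix y z assume "y \<in> ?S" "z \<in> ?S"
    then obtain k k' where kk: "k < ?n" "k' < ?n" "y = rotate k T" "z = rotate k' T" by auto
    have "colex_less y z \<longleftrightarrow> colex_less (take (pre T k) T) (take (pre T k') T)" using rot_colex[OF t kk(1,2)] kk by simp
    also have "\<dots> \<longleftrightarrow> IPA T (pre T k) < IPA T (pre T k')" using IPA_less pre_r kk by metis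
    also have "\<dots> \<longleftrightarrow> f y < f z" using fr kk fpos[OF kk(1)] fpos[OF kk(2)] by auto
    finally show "colex_less y z \<longleftrightarrow> f y < f z" .
  qed
  have pre_inj: "k = k'" if "k < ?n" "k' < ?n" "pre T k = pre T k'" for k k'
    using that by (auto simp: pre_def split: if_splits)
  have finj: "k = k'" if "k < ?n" "k' < ?n" "f (rotate k T) = f (rotate k' T)" for k k'
  proof -
    have "IPA T (pre T k) = IPA T (pre T k')"
      using that(3) fr[OF that(1)] fr[OF that(2)] fpos[OF that(1)] fpos[OF that(2)] by simp
    then have "pre T k = pre T k'" using IPA_inj pre_r that by blast
    then show ?thesis using pre_inj that by blast
  qed
  have inj: "inj_on f ?S" by (rule inj_onI) (auto dest: finj)
  have dist: "distinct ?rots" unfolding distinct_map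
  proof (intro conjI inj_onI)
    fix x y assume "x \<in> set [0..<?n]" "y \<in> set [0..<?n]" "rotate x T = rotate y T"
    then show "x = y" using finj[of x y] by simp
  qed simp
  define L where "L = sort_key f ?rots"
  have cs: "colex_sort ?rots = L" unfolding L_def by (rule colex_sort_eq[OF dist _ ord inj]) simp
  have fS: "f ` ?S = {0..<?n}"
  proof
    show "f ` ?S \<subseteq> {0..<?n}"
    proof
      fix r assume "r \<in> f ` ?S"
      then obtain k where "k < ?n" "r = f (rotate k T)" by auto
      then show "r \<in> {0..<?n}" using fr IPA_range[OF pre_r] by fastforce
    qed
    show "{0..<?n} \<subseteq> f ` ?S"
    proof
      fix r assume r: "r \<in> {0..<?n}"
      have "r + 1 \<in> IPA T ` {1..?n}" using IPA_bij[of T] r unfolding bij_betw_def by auto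
      then obtain j where j: "j \<in> {1..?n}" "IPA T j = r + 1" by auto
      have "j mod ?n < ?n" using ne by simp
      moreover have "f (rotate (j mod ?n) T) = r" using fr[of "j mod ?n"] pre_mod[OF j(1)] j ne by simp
      ultimately show "r \<in> f ` ?S" by force
    qed
  qed
  have mL: "map f L = [0..<?n]"
  proof (rule sorted_distinct_set_unique)
    show "sorted (map f L)" unfolding L_def by simp
    show "distinct (map f L)" unfolding L_def distinct_map using dist inj by simp
    show "set (map f L) = set [0..<?n]" unfolding L_def using fS by simp
  qed auto
  have lenL: "length L = ?n" unfolding L_def by simp
  have cb: "coBWT T = map hd L" unfolding coBWT_def cs ..
  show ?thesis
  proof (intro conjI ballI)
    show "length (coBWT T) = ?n" using cb lenL by simp
    fix j assume j: "j \<in> {1..?n}"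
    define r where "r = IPA T j - 1"
    have rn: "r < ?n" using IPA_range[OF j] r_def by auto
    have "L ! r \<in> set L" using rn lenL by simp
    then have "L ! r \<in> ?S" unfolding L_def by simp
    then obtain k where k: "k < ?n" "L ! r = rotate k T" by auto
    have "map f L ! r = [0..<?n] ! r" using mL by simp
    then have "f (L ! r) = r" using rn lenL by simp
    then have "IPA T (pre T k) = IPA T j" using fr[OF k(1)] k r_def fpos[OF k(1)] IPA_range[OF j] by auto
    then have pk: "pre T k = j" using IPA_inj pre_r[OF k(1)] j by blast
    have "hd (rotate k T) = T ! k" using k ne by (simp add: rotate_drop_take hd_drop_conv_nth)
    moreover have "k = j mod ?n" using pk k j by (auto simp: pre_def split: if_splits)
    ultimately show "coBWT T ! (IPA T j - 1) = T ! (j mod ?n)" using cb rn lenL k r_def by simp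
  qed
qed



lemma runs_le: "card {i. i < length xs \<and> (i = 0 \<or> xs!(i-1) \<noteq> xs!i)} \<le> length (remdups_adj xs)"
proof (induction xs rule: remdups_adj.induct)
  case 1 then show ?case by simp
next
  case (2 x)
  have "{i. i < length [x] \<and> (i = 0 \<or> [x]!(i-1) \<noteq> [x]!i)} = {0}" by auto
  then show ?case by simp
next
  case (3 x y xs)
  let ?A = "{i. i < length (y#xs) \<and> (i = 0 \<or> (y#xs)!(i-1) \<noteq> (y#xs)!i)}"
  let ?B = "{i. i < length (x#y#xs) \<and> (i = 0 \<or> (x#y#xs)!(i-1) \<noteq> (x#y#xs)!i)}"
  have finA: "finite ?A" by simp
  have A0: "0 \<in> ?A" by simp
  have sub: "?B \<subseteq> insert 0 (Suc ` ?A)"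
  proof
    fix i assume i: "i \<in> ?B"
    show "i \<in> insert 0 (Suc ` ?A)"
    proof (cases i)
      case (Suc i')
      then have "i' \<in> ?A" using i by (cases i') auto
      then show ?thesis using Suc by auto
    qed simp
  qed
  show ?case
  proof (cases "x = y")
    case True
    have sub2: "?B \<subseteq> insert 0 (Suc ` (?A - {0}))"
    proof
      fix i assume i: "i \<in> ?B"
      show "i \<in> insert 0 (Suc ` (?A - {0}))"
      proof (cases i)
        case (Suc i')
        then have "i' \<in> ?A - {0}" using i True by (cases i') auto
        then show ?thesis using Suc by auto
      qed simp
    qed
    have "card ?B \<le> card (insert 0 (Suc ` (?A - {0})))" by (rule card_mono[OF _ sub2]) simp
    also have "\<dots> \<le> Suc (card (Suc ` (?A - {0})))" by (simp add: card_insert_le_m1)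
    also have "\<dots> \<le> Suc (card (?A - {0}))" using card_image_le[of "?A - {0}" Suc] by simp
    also have "\<dots> = card ?A" by (rule card_Suc_Diff1[OF finA A0])
    also have "\<dots> \<le> length (remdups_adj (y # xs))" using 3 True by simp
    finally show ?thesis using True by simp
  next
    case False
    have "card ?B \<le> card (insert 0 (Suc ` ?A))" by (rule card_mono[OF _ sub]) simp
    also have "\<dots> \<le> Suc (card (Suc ` ?A))" by (simp add: card_insert_le_m1)
    also have "\<dots> \<le> Suc (card ?A)" using card_image_le[of "?A" Suc] by simp
    also have "\<dots> \<le> Suc (length (remdups_adj (y # xs)))" using 3 False by simp
    finally show ?thesis using False by simp
  qed
qed

lemma R_card:
  assumes bij: "bij_betw \<sigma> {1..n} {1..n}" and len: "length xs = n"
    and h: "\<forall>j\<in>{1..n}. xs!(\<sigma> j - 1) = T!(j mod n)"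
  shows "card {r \<in> {1..n}. r = 1 \<or> (\<forall>k\<in>{1..n}. \<forall>q\<in>{1..n}. \<sigma> k = r - 1 \<longrightarrow> \<sigma> q = r \<longrightarrow> T!(k mod n) \<noteq> T!(q mod n))}
         \<le> length (remdups_adj xs)" (is "card ?R \<le> _")
proof -
  let ?A = "{i. i < length xs \<and> (i = 0 \<or> xs!(i-1) \<noteq> xs!i)}"
  have ssurj: "\<exists>x\<in>{1..n}. \<sigma> x = r" if "r \<in> {1..n}" for r
    using bij that unfolding bij_betw_def by (metis imageE)
  have "?R \<subseteq> Suc ` ?A"
  proof
    fix r assume r: "r \<in> ?R"
    show "r \<in> Suc ` ?A"
    proof (cases "r = 1")
      case True
      then have "0 \<in> ?A" using r len by auto
      then show ?thesis using True by force
    next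
      case False
      then have r2: "r \<ge> 2" "r \<le> n" using r by auto
      have "r - 1 \<in> {1..n}" using r2 by auto
      then obtain k where k: "k \<in> {1..n}" "\<sigma> k = r - 1" using ssurj by blast
      obtain q where q: "q \<in> {1..n}" "\<sigma> q = r" using ssurj[of r] r2 by auto
      have "T!(k mod n) \<noteq> T!(q mod n)" using r False k q by auto
      moreover have "xs!(r-1-1) = T!(k mod n)" using h[rule_format, OF k(1)] k(2) by simp
      moreover have "xs!(r-1) = T!(q mod n)" using h[rule_format, OF q(1)] q(2) by simp
      ultimately have "xs!(r-1-1) \<noteq> xs!(r-1)" by simp
      then have "r - 1 \<in> ?A" using r2 len by auto
      then show ?thesis using r2 by (intro image_eqI[of _ _ "r-1"]) auto
    qed
  qed
  then have "card ?R \<le> card (Suc ` ?A)" by (intro card_mono) auto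
  also have "\<dots> \<le> card ?A" by (rule card_image_le) simp
  also have "\<dots> \<le> length (remdups_adj xs)" by (rule runs_le)
  finally show ?thesis .
qed

theorem lemma43:
  fixes T :: "nat list"
  assumes "is_text T"
  shows "order_preserving T (IPA T)
       \<and> order_preserving T (\<lambda>i. length T - IPA T i + 1)
       \<and> card (st_colex_minus T) \<le> rbar T
       \<and> card (st_colex_plus T) \<le> rbar T"
proof (intro conjI)
  show "order_preserving T (IPA T)" by (rule op_IPA)
  show "order_preserving T (\<lambda>i. length T - IPA T i + 1)" by (rule op_pb)
  have t: "is_text T" by fact
  let ?n = "length T"
  have ne: "T \<noteq> []" using t by (simp add: is_text_def)
  have cb: "length (coBWT T) = ?n" "\<forall>j\<in>{1..?n}. coBWT T ! (IPA T j - 1) = T ! (j mod ?n)"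
    using coBWT_prop[OF t] by auto
  show "card (st_colex_minus T) \<le> rbar T"
  proof -
    have "card (PDA T (IPA T)) \<le> card {r \<in> {1..?n}. r = 1 \<or> (\<forall>k\<in>{1..?n}. \<forall>q\<in>{1..?n}. IPA T k = r - 1 \<longrightarrow> IPA T q = r \<longrightarrow> T!(k mod ?n) \<noteq> T!(q mod ?n))}"
    proof (rule core[OF refl t IPA_bij])
      show "\<And>a b. a \<in> {2..?n} \<Longrightarrow> b \<in> {2..?n} \<Longrightarrow> T!(a-1) = T!(b-1) \<Longrightarrow> (IPA T a < IPA T b \<longleftrightarrow> IPA T (a-1) < IPA T (b-1))"
        by (rule IPA_step)
      show "\<And>a b x. a \<in> {1..?n} \<Longrightarrow> b \<in> {1..?n} \<Longrightarrow> x \<in> {1..?n} \<Longrightarrow> IPA T a \<le> IPA T x \<Longrightarrow> IPA T x \<le> IPA T b \<Longrightarrow> T!(a-1) = T!(b-1) \<Longrightarrow> T!(x-1) = T!(a-1)"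
        by (rule IPA_H3)
      show "((\<forall>b\<in>{2..?n}. T!0 = T!(b-1) \<longrightarrow> IPA T 1 < IPA T b) \<and> IPA T ?n = 1) \<or> ((\<forall>b\<in>{2..?n}. T!0 = T!(b-1) \<longrightarrow> IPA T b < IPA T 1) \<and> IPA T ?n = ?n)"
        using IPA_first IPA_last[OF t] by blast
    qed
    also have "\<dots> \<le> length (remdups_adj (coBWT T))"
      by (rule R_card[OF IPA_bij cb(1) cb(2)])
    finally show ?thesis unfolding st_colex_minus_def rbar_def .
  qed
  show "card (st_colex_plus T) \<le> rbar T"
  proof -
    have eq: "(\<lambda>i. length T - IPA T i + 1) = pb T" unfolding pb_def by auto
    have "card (PDA T (pb T)) \<le> card {r \<in> {1..?n}. r = 1 \<or> (\<forall>k\<in>{1..?n}. \<forall>q\<in>{1..?n}. pb T k = r - 1 \<longrightarrow> pb T q = r \<longrightarrow> T!(k mod ?n) \<noteq> T!(q mod ?n))}"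
    proof (rule core[OF refl t pb_bij])
      fix a b assume a: "a \<in> {2..?n}" and b: "b \<in> {2..?n}" and e: "T!(a-1) = T!(b-1)"
      have "pb T a < pb T b \<longleftrightarrow> IPA T b < IPA T a" using a b pb_less by auto
      also have "\<dots> \<longleftrightarrow> IPA T (b-1) < IPA T (a-1)" using IPA_step[OF b a e[symmetric]] .
      also have "\<dots> \<longleftrightarrow> pb T (a-1) < pb T (b-1)"
      proof -
        have "a - 1 \<in> {1..?n}" "b - 1 \<in> {1..?n}" using a b by auto
        then show ?thesis using pb_less[of "a-1" T "b-1"] by simp
      qed
      finally show "pb T a < pb T b \<longleftrightarrow> pb T (a-1) < pb T (b-1)" .
    next
      fix a b x assume a: "a \<in> {1..?n}" and b: "b \<in> {1..?n}" and x: "x \<in> {1..?n}"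
        and l1: "pb T a \<le> pb T x" and l2: "pb T x \<le> pb T b" and e: "T!(a-1) = T!(b-1)"
      have "IPA T b \<le> IPA T x" "IPA T x \<le> IPA T a"
        using l1 l2 pb_less[OF a x] pb_less[OF x b] pb_less[OF x a] pb_less[OF b x] by (auto simp: not_less[symmetric])
      then show "T!(x-1) = T!(a-1)" using IPA_H3[OF b a x] e by simp
    next
      have "\<forall>b\<in>{2..?n}. T!0 = T!(b-1) \<longrightarrow> pb T b < pb T 1"
        using IPA_first pb_less ne by (auto simp: Suc_leI)
      moreover have "pb T ?n = ?n" unfolding pb_def using IPA_last[OF t] ne by simp
      ultimately show "((\<forall>b\<in>{2..?n}. T!0 = T!(b-1) \<longrightarrow> pb T 1 < pb T b) \<and> pb T ?n = 1) \<or> ((\<forall>b\<in>{2..?n}. T!0 = T!(b-1) \<longrightarrow> pb T b < pb T 1) \<and> pb T ?n = ?n)"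
        by blast
    qed
    also have "\<dots> \<le> length (remdups_adj (rev (coBWT T)))"
    proof (rule R_card[OF pb_bij])
      show "length (rev (coBWT T)) = ?n" using cb by simp
      show "\<forall>j\<in>{1..?n}. rev (coBWT T) ! (pb T j - 1) = T!(j mod ?n)"
      proof
        fix j assume j: "j \<in> {1..?n}"
        have r: "IPA T j \<in> {1..?n}" using IPA_range[OF j] .
        have "rev (coBWT T) ! (pb T j - 1) = coBWT T ! (length (coBWT T) - Suc (pb T j - 1))"
          using r cb(1) unfolding pb_def by (intro rev_nth) auto
        also have "length (coBWT T) - Suc (pb T j - 1) = IPA T j - 1" using r cb(1) unfolding pb_def by auto
        finally show "rev (coBWT T) ! (pb T j - 1) = T!(j mod ?n)" using cb(2) j by simp
      qed
    qed
    also have "\<dots> = rbar T" unfolding rbar_def by simp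
    finally show ?thesis unfolding st_colex_plus_def eq .
  qed
qed

end
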